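(* Consider the two-unicast wireline network ("butterfly network 1") with nodes $\mathsf{S}_1,\mathsf{S}_2,\mathsf{M}_1,\mathsf{M}_2,\mathsf{D}_1,\mathsf{D}_2$ and seven directed edges: edge 1 from $\mathsf{S}_1$ to $\mathsf{M}_1$, edge 2 from $\mathsf{S}_2$ to $\mathsf{M}_1$, edge 3 from $\mathsf{M}_1$ to $\mathsf{M}_2$, edge 4 from $\mathsf{S}_1$ to $\mathsf{D}_2$, edge 5 from $\mathsf{S}_2$ to $\mathsf{D}_1$, edge 6 from $\mathsf{M}_2$ to $\mathsf{D}_2$, edge 7 from $\mathsf{M}_2$ to $\mathsf{D}_1$, with arbitrary capacities $\mathsf{C}_1,\dots,\mathsf{C}_7\ge 0$. Then secure communication is not possible: the only securely achievable rate pair is $(R_1,R_2)=(0,0)$.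
   Context: Network model: a directed acyclic graph; each edge $e$ is a noiseless orthogonal channel of capacity $\mathsf{C}_e$ carrying symbols over $\mathbb{F}_q$; over $n$ channel uses, edge $e$ carries $X_e^n$, received as $Y_e^n=X_e^n$. Source $\mathsf{S}_i$ has message $W_i$ (uniform, $q$-ary entropy $nR_i$, $W_1,W_2$ independent) to be decoded at $\mathsf{D}_i$, and an independent, unlimited private source of randomness $\Theta_i$. A rate pair is securely achievable if for some block length $n$ there are encoding functions—an edge leaving $\mathsf{S}_i$ carries a function of $(W_i,\Theta_i)$, any other edge a function of the symbols received on the incoming edges of its tail—and decoders at $\mathsf{D}_j$ (functions of the symbols on the incoming edges of $\mathsf{D}_j$) recovering $W_j$ with vanishing error probability, and moreover a passive eavesdropper wiretapping any single edge (which one is unknown) learns essentially nothing: for every edge $e$, $I(W_1,W_2;Z_e^n)<\epsilon_n$ with $\epsilon_n\to 0$, where $Z_e^n=X_e^n$ is the eavesdropper's observation on edge $e$ (strong secrecy). *)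

theory Defs
  imports "HOL-Probability.Probability" "HOL-Computational_Algebra.Primes"
begin

text \<open>Symbols of an edge over n channel uses are encoded as natural numbers; edge e carries
  a block of floor(n C_e) symbols of F_q, i.e. a value in {0..< q ^ floor(n C_e)}.\<close>

record bf_code =
  th1 :: "nat pmf"                   \<comment> \<open>distribution of private randomness of S1\<close>
  th2 :: "nat pmf"                   \<comment> \<open>distribution of private randomness of S2\<close>
  enc1 :: "nat \<Rightarrow> nat \<Rightarrow> nat"     \<comment> \<open>edge 1 from (W1, Theta1)\<close>
  enc4 :: "nat \<Rightarrow> nat \<Rightarrow> nat"     \<comment> \<open>edge 4 from (W1, Theta1)\<close>
  enc2 :: "nat \<Rightarrow> nat \<Rightarrow> nat"     \<comment> \<open>edge 2 from (W2, Theta2)\<close>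
  enc5 :: "nat \<Rightarrow> nat \<Rightarrow> nat"     \<comment> \<open>edge 5 from (W2, Theta2)\<close>
  enc3 :: "nat \<Rightarrow> nat \<Rightarrow> nat"     \<comment> \<open>edge 3 at M1 from (X1, X2)\<close>
  enc6 :: "nat \<Rightarrow> nat"            \<comment> \<open>edge 6 at M2 from X3\<close>
  enc7 :: "nat \<Rightarrow> nat"            \<comment> \<open>edge 7 at M2 from X3\<close>
  dec1 :: "nat \<Rightarrow> nat \<Rightarrow> nat"     \<comment> \<open>decoder at D1 from (X5, X7)\<close>
  dec2 :: "nat \<Rightarrow> nat \<Rightarrow> nat"     \<comment> \<open>decoder at D2 from (X4, X6)\<close>

definition prime_power :: "nat \<Rightarrow> bool" where
  "prime_power q \<longleftrightarrow> (\<exists>p k. prime p \<and> k > 0 \<and> q = p ^ k)"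

definition edge_len :: "(nat \<Rightarrow> real) \<Rightarrow> nat \<Rightarrow> nat \<Rightarrow> nat" where
  "edge_len C n e = nat \<lfloor>real n * C e\<rfloor>"

definition msg_size :: "nat \<Rightarrow> nat \<Rightarrow> real \<Rightarrow> nat" where
  "msg_size q n R = nat \<lceil>real q powr (real n * R)\<rceil>"

text \<open>Outcome \<omega> = (W1, W2, Theta1, Theta2); value carried on edge e.\<close>
fun bf_edge :: "bf_code \<Rightarrow> nat \<Rightarrow> nat \<times> nat \<times> nat \<times> nat \<Rightarrow> nat" where
  "bf_edge c e (w1, w2, t1, t2) =
     (let x1 = enc1 c w1 t1; x4 = enc4 c w1 t1;
          x2 = enc2 c w2 t2; x5 = enc5 c w2 t2;
          x3 = enc3 c x1 x2; x6 = enc6 c x3; x7 = enc7 c x3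
      in if e = 1 then x1 else if e = 2 then x2 else if e = 3 then x3
         else if e = 4 then x4 else if e = 5 then x5 else if e = 6 then x6 else x7)"

definition bf_valid :: "nat \<Rightarrow> (nat \<Rightarrow> real) \<Rightarrow> nat \<Rightarrow> bf_code \<Rightarrow> bool" where
  "bf_valid q C n c \<longleftrightarrow>
     (\<forall>w t. enc1 c w t < q ^ edge_len C n 1) \<and>
     (\<forall>w t. enc2 c w t < q ^ edge_len C n 2) \<and>
     (\<forall>a b. enc3 c a b < q ^ edge_len C n 3) \<and>
     (\<forall>w t. enc4 c w t < q ^ edge_len C n 4) \<and>
     (\<forall>w t. enc5 c w t < q ^ edge_len C n 5) \<and>
     (\<forall>a. enc6 c a < q ^ edge_len C n 6) \<and>
     (\<forall>a. enc7 c a < q ^ edge_len C n 7)"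

definition bf_space :: "nat \<Rightarrow> nat \<Rightarrow> real \<times> real \<Rightarrow> bf_code \<Rightarrow> (nat \<times> nat \<times> nat \<times> nat) pmf" where
  "bf_space q n R c =
     pair_pmf (pmf_of_set {..<msg_size q n (fst R)})
       (pair_pmf (pmf_of_set {..<msg_size q n (snd R)}) (pair_pmf (th1 c) (th2 c)))"

definition bf_error_prob :: "nat \<Rightarrow> nat \<Rightarrow> real \<times> real \<Rightarrow> bf_code \<Rightarrow> real" where
  "bf_error_prob q n R c =
     measure_pmf.prob (bf_space q n R c)
       {\<omega>. dec1 c (bf_edge c 5 \<omega>) (bf_edge c 7 \<omega>) \<noteq> fst \<omega> \<or>
           dec2 c (bf_edge c 4 \<omega>) (bf_edge c 6 \<omega>) \<noteq> fst (snd \<omega>)}"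

definition disc_mutual_info :: "real \<Rightarrow> 'w pmf \<Rightarrow> ('w \<Rightarrow> 'x) \<Rightarrow> ('w \<Rightarrow> 'y) \<Rightarrow> real" where
  "disc_mutual_info b P X Y =
     (\<Sum>(x, y) \<in> (\<lambda>\<omega>. (X \<omega>, Y \<omega>)) ` set_pmf P.
        let pxy = measure_pmf.prob P {\<omega>. X \<omega> = x \<and> Y \<omega> = y};
            px = measure_pmf.prob P {\<omega>. X \<omega> = x};
            py = measure_pmf.prob P {\<omega>. Y \<omega> = y}
        in pxy * log b (pxy / (px * py)))"

definition bf_leakage :: "nat \<Rightarrow> nat \<Rightarrow> real \<times> real \<Rightarrow> bf_code \<Rightarrow> nat \<Rightarrow> real" where
  "bf_leakage q n R c e =
     disc_mutual_info (real q) (bf_space q n R c) (\<lambda>\<omega>. (fst \<omega>, fst (snd \<omega>))) (bf_edge c e)"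

definition bf_securely_achievable :: "nat \<Rightarrow> (nat \<Rightarrow> real) \<Rightarrow> real \<times> real \<Rightarrow> bool" where
  "bf_securely_achievable q C R \<longleftrightarrow>
     fst R \<ge> 0 \<and> snd R \<ge> 0 \<and>
     (\<exists>code :: nat \<Rightarrow> bf_code.
        (\<forall>n. bf_valid q C n (code n)) \<and>
        (\<lambda>n. bf_error_prob q n R (code n)) \<longlonglongrightarrow> 0 \<and>
        (\<forall>e \<in> {1..7}. (\<lambda>n. bf_leakage q n R (code n) e) \<longlonglongrightarrow> 0))"

end

theory Submission
  imports Defs
begin

lemma logsum_term:
  fixes a b A B :: real
  assumes "a > 0" "b > 0" "A > 0" "B > 0"
  shows "a * ln (A / B) - a * ln (a / b) \<le> b * A / B - a"
proof -
  have "ln (b * A / (a * B)) \<le> b * A / (a * B) - 1"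
    by (rule ln_le_minus_one) (use assms in simp)
  moreover have "ln (b * A / (a * B)) = ln (A / B) - ln (a / b)"
    using assms by (simp add: ln_div ln_mult)
  ultimately have "a * (ln (A / B) - ln (a / b)) \<le> a * (b * A / (a * B) - 1)"
    using assms by (intro mult_left_mono) auto
  also have "\<dots> = b * A / B - a" using assms by (simp add: field_simps)
  finally show ?thesis by (simp add: algebra_simps)
qed

lemma logsum:
  fixes a b :: "'i \<Rightarrow> real"
  assumes "finite S" "S \<noteq> {}" "\<And>i. i \<in> S \<Longrightarrow> a i > 0" "\<And>i. i \<in> S \<Longrightarrow> b i > 0"
  shows "(\<Sum>i\<in>S. a i) * ln ((\<Sum>i\<in>S. a i) / (\<Sum>i\<in>S. b i)) \<le> (\<Sum>i\<in>S. a i * ln (a i / b i))"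
proof -
  define A where "A = (\<Sum>i\<in>S. a i)"
  define B where "B = (\<Sum>i\<in>S. b i)"
  have A: "A > 0" unfolding A_def using assms by (intro sum_pos) auto
  have B: "B > 0" unfolding B_def using assms by (intro sum_pos) auto
  have "(\<Sum>i\<in>S. a i * ln (A / B) - a i * ln (a i / b i)) \<le> (\<Sum>i\<in>S. b i * A / B - a i)"
    using assms A B by (intro sum_mono logsum_term) auto
  also have "\<dots> = 0" using B by (simp add: sum_subtractf sum_divide_distrib[symmetric] 
        sum_distrib_right[symmetric] B_def[symmetric] A_def[symmetric])
  finally show ?thesis
    by (simp add: sum_subtractf sum_distrib_right[symmetric] A_def[symmetric] B_def[symmetric])
qed

lemma term_lower:
  fixes a b :: real assumes "a > 0" "b > 0"
  shows "a - b \<le> a * ln (a / b)"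
proof -
  have "ln (b / a) \<le> b / a - 1" by (rule ln_le_minus_one) (use assms in simp)
  hence "a * ln (b / a) \<le> a * (b / a - 1)" using assms by (intro mult_left_mono) auto
  moreover have "ln (a / b) = - ln (b / a)" using assms by (simp add: ln_div)
  moreover have "a * (b / a - 1) = b - a" using assms by (simp add: field_simps)
  ultimately show ?thesis by simp
qed

lemma avg_bound:
  assumes "\<And>b. b \<in> set_pmf B \<Longrightarrow> measure_pmf.prob A {a. (b, a) \<in> E} \<le> c" "c \<ge> 0"
  shows "measure_pmf.prob (pair_pmf B A) E \<le> c"
proof -
  have "emeasure (pair_pmf B A) E = (\<integral>\<^sup>+b. emeasure (bind_pmf A (\<lambda>a. return_pmf (b, a))) E \<partial>B)"
    by (simp add: pair_pmf_def)
  also have "\<dots> \<le> (\<integral>\<^sup>+b. ennreal c \<partial>B)"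
  proof (rule nn_integral_mono_AE, rule AE_pmfI)
    fix b assume b: "b \<in> set_pmf B"
    have "bind_pmf A (\<lambda>a. return_pmf (b, a)) = map_pmf (Pair b) A" by (simp add: map_pmf_def)
    hence "emeasure (bind_pmf A (\<lambda>a. return_pmf (b, a))) E = ennreal (measure_pmf.prob A {a. (b, a) \<in> E})"
      by (simp add: measure_pmf.emeasure_eq_measure vimage_def)
    thus "emeasure (bind_pmf A (\<lambda>a. return_pmf (b, a))) E \<le> ennreal c"
      using assms(1)[OF b] by (simp add: ennreal_leI)
  qed
  also have "\<dots> = ennreal c" by (simp add: measure_pmf.emeasure_space_1)
  finally show ?thesis using assms(2) by (simp add: measure_pmf.emeasure_eq_measure)
qed

lemma mi_lower:
  fixes P :: "'w pmf" and X :: "'w \<Rightarrow> 'x" and Y :: "'w \<Rightarrow> 'y" and g :: "'x \<Rightarrow> 'v" and h :: "'y \<Rightarrow> 'v"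
  assumes fin: "finite ((\<lambda>\<omega>. (X \<omega>, Y \<omega>)) ` set_pmf P)"
    and b: "b > 1" and M: "M \<ge> 2"
    and marg: "\<And>v. measure_pmf.prob P {\<omega>. g (X \<omega>) = v} \<le> 1 / M"
    and succ: "measure_pmf.prob P {\<omega>. h (Y \<omega>) = g (X \<omega>)} \<ge> 1/2"
  shows "ln (M/2) / 2 - 1 \<le> disc_mutual_info b P X Y * ln b"
proof -
  define Z where "Z = map_pmf (\<lambda>\<omega>. (X \<omega>, Y \<omega>)) P"
  define PX where "PX = map_pmf X P"
  define PY where "PY = map_pmf Y P"
  define T where "T = set_pmf Z"
  define a where "a p = pmf Z p" for p
  define bb where "bb p = pmf PX (fst p) * pmf PY (snd p)" for p
  have finT: "finite T" using fin by (simp add: T_def Z_def)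
  have pxy: "measure_pmf.prob P {\<omega>. X \<omega> = x \<and> Y \<omega> = y} = pmf Z (x, y)" for x y
    unfolding Z_def pmf_map by (rule arg_cong[where f="measure_pmf.prob P"]) auto
  have px: "measure_pmf.prob P {\<omega>. X \<omega> = x} = pmf PX x" for x
    unfolding PX_def pmf_map by (rule arg_cong[where f="measure_pmf.prob P"]) auto
  have py: "measure_pmf.prob P {\<omega>. Y \<omega> = y} = pmf PY y" for y
    unfolding PY_def pmf_map by (rule arg_cong[where f="measure_pmf.prob P"]) auto
  have img: "(\<lambda>\<omega>. (X \<omega>, Y \<omega>)) ` set_pmf P = T" by (simp add: T_def Z_def)
  have dmi: "disc_mutual_info b P X Y * ln b = (\<Sum>p\<in>T. a p * ln (a p / bb p))"
  proof -
    have "disc_mutual_info b P X Y = (\<Sum>p\<in>T. a p * log b (a p / bb p))"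
      unfolding disc_mutual_info_def img
      by (rule sum.cong) (auto simp: pxy px py a_def bb_def Let_def)
    thus ?thesis using b by (simp add: log_def sum_distrib_right)
  qed
  have apos: "a p > 0" if "p \<in> T" for p
    using that by (simp add: a_def T_def pmf_positive)
  have bpos: "bb p > 0" if "p \<in> T" for p
  proof -
    from that obtain \<omega> where "\<omega> \<in> set_pmf P" "p = (X \<omega>, Y \<omega>)" by (auto simp: T_def Z_def)
    hence "fst p \<in> set_pmf PX" "snd p \<in> set_pmf PY" by (auto simp: PX_def PY_def)
    thus ?thesis by (simp add: bb_def pmf_positive)
  qed
  define S where "S = {p \<in> T. h (snd p) = g (fst p)}"
  have SsubT: "S \<subseteq> T" by (auto simp: S_def)
  have finS: "finite S" using finT SsubT finite_subset by blast
  define SX where "SX = fst ` T"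
  define SY where "SY = snd ` T"
  have finSX: "finite SX" "finite SY" using finT by (auto simp: SX_def SY_def)
  have TXY: "T \<subseteq> SX \<times> SY" by (force simp: SX_def SY_def)
  have bnn: "bb p \<ge> 0" for p by (simp add: bb_def)
  have AS: "(\<Sum>p\<in>S. a p) \<ge> 1/2"
  proof -
    have eqS: "S = {p. h (snd p) = g (fst p)} \<inter> set_pmf Z" by (auto simp: S_def T_def)
    have "(\<Sum>p\<in>S. a p) = measure_pmf.prob Z S"
      using finS by (simp add: a_def measure_measure_pmf_finite)
    also have "\<dots> = measure_pmf.prob Z ({p. h (snd p) = g (fst p)} \<inter> set_pmf Z)" by (simp only: eqS)
    also have "\<dots> = measure_pmf.prob Z {p. h (snd p) = g (fst p)}"
      by (rule measure_Int_set_pmf)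
    also have "\<dots> = measure_pmf.prob P {\<omega>. h (Y \<omega>) = g (X \<omega>)}"
      by (simp add: Z_def vimage_def)
    finally show ?thesis using succ by simp
  qed
  have Sne: "S \<noteq> {}" using AS by auto
  have sumPX: "(\<Sum>x\<in>F. pmf PX x) \<le> 1" if "finite F" for F
    using that by (simp add: measure_measure_pmf_finite[symmetric])
  have sumPY: "(\<Sum>y\<in>F. pmf PY y) \<le> 1" if "finite F" for F
    using that by (simp add: measure_measure_pmf_finite[symmetric])
  have BS: "(\<Sum>p\<in>S. bb p) \<le> 1 / M"
  proof -
    have "(\<Sum>p\<in>S. bb p) = (\<Sum>p\<in>S. if h (snd p) = g (fst p) then bb p else 0)"
      by (rule sum.cong) (auto simp: S_def)
    also have "\<dots> \<le> (\<Sum>p\<in>SX \<times> SY. if h (snd p) = g (fst p) then bb p else 0)"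
      using SsubT TXY finSX by (intro sum_mono2) (auto simp: bnn)
    also have "\<dots> = (\<Sum>x\<in>SX. \<Sum>y\<in>SY. if h y = g x then bb (x, y) else 0)"
      unfolding sum.cartesian_product by (rule sum.cong) auto
    also have "\<dots> = (\<Sum>y\<in>SY. \<Sum>x\<in>SX. if h y = g x then bb (x, y) else 0)"
      by (rule sum.swap)
    also have "\<dots> = (\<Sum>y\<in>SY. pmf PY y * (\<Sum>x\<in>SX \<inter> {x. g x = h y}. pmf PX x))"
    proof (rule sum.cong[OF refl])
      fix y
      have "(\<Sum>x\<in>SX. if h y = g x then bb (x, y) else 0) = (\<Sum>x\<in>SX \<inter> {x. g x = h y}. bb (x, y))"
        using finSX by (simp add: sum.inter_restrict) (rule sum.cong, auto)
      also have "\<dots> = pmf PY y * (\<Sum>x\<in>SX \<inter> {x. g x = h y}. pmf PX x)"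
        by (simp add: bb_def sum_distrib_left mult.commute)
      finally show "(\<Sum>x\<in>SX. if h y = g x then bb (x, y) else 0) = pmf PY y * (\<Sum>x\<in>SX \<inter> {x. g x = h y}. pmf PX x)" .
    qed
    also have "\<dots> \<le> (\<Sum>y\<in>SY. pmf PY y * (1 / M))"
    proof (rule sum_mono, rule mult_left_mono)
      fix y
      have "(\<Sum>x\<in>SX \<inter> {x. g x = h y}. pmf PX x) = measure_pmf.prob PX (SX \<inter> {x. g x = h y})"
        using finSX by (simp add: measure_measure_pmf_finite)
      also have "\<dots> \<le> measure_pmf.prob PX {x. g x = h y}"
        by (rule measure_pmf.finite_measure_mono) auto
      also have "\<dots> = measure_pmf.prob P {\<omega>. g (X \<omega>) = h y}"
        by (simp add: PX_def vimage_def)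
      also have "\<dots> \<le> 1 / M" by (rule marg)
      finally show "(\<Sum>x\<in>SX \<inter> {x. g x = h y}. pmf PX x) \<le> 1 / M" .
    qed simp
    also have "\<dots> = (\<Sum>y\<in>SY. pmf PY y) * (1 / M)" by (simp add: sum_divide_distrib)
    also have "\<dots> \<le> 1 * (1 / M)"
      using M finSX sumPY by (intro mult_right_mono) auto
    finally show ?thesis by simp
  qed
  have BR: "(\<Sum>p\<in>T - S. bb p) \<le> 1"
  proof -
    have "(\<Sum>p\<in>T - S. bb p) \<le> (\<Sum>p\<in>SX \<times> SY. bb p)"
      using TXY finSX by (intro sum_mono2) (auto simp: bnn)
    also have "\<dots> = (\<Sum>x\<in>SX. pmf PX x) * (\<Sum>y\<in>SY. pmf PY y)"
      unfolding sum_product sum.cartesian_product bb_def by (rule sum.cong) auto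
    also have "\<dots> \<le> 1 * 1"
      using finSX sumPX sumPY by (intro mult_mono) (auto simp: sum_nonneg)
    finally show ?thesis by simp
  qed
  have part: "(\<Sum>p\<in>T. a p * ln (a p / bb p)) = (\<Sum>p\<in>T - S. a p * ln (a p / bb p)) + (\<Sum>p\<in>S. a p * ln (a p / bb p))"
    using SsubT finT by (rule sum.subset_diff)
  have R: "(\<Sum>p\<in>T - S. a p * ln (a p / bb p)) \<ge> -1"
  proof -
    have "(\<Sum>p\<in>T - S. a p - bb p) \<le> (\<Sum>p\<in>T - S. a p * ln (a p / bb p))"
      using apos bpos by (intro sum_mono term_lower) auto
    moreover have "(\<Sum>p\<in>T - S. a p - bb p) \<ge> - (\<Sum>p\<in>T - S. bb p)"
      using apos by (simp add: sum_subtractf, intro sum_nonneg) (auto simp: less_imp_le)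
    ultimately show ?thesis using BR by linarith
  qed
  define A where "A = (\<Sum>p\<in>S. a p)"
  define B where "B = (\<Sum>p\<in>S. bb p)"
  have Bpos: "B > 0" unfolding B_def using Sne finS bpos SsubT by (intro sum_pos) auto
  have A1: "A \<le> 1"
  proof -
    have "A = measure_pmf.prob Z S" using finS by (simp add: A_def a_def measure_measure_pmf_finite)
    thus ?thesis by simp
  qed
  have L: "A * ln (A / B) \<le> (\<Sum>p\<in>S. a p * ln (a p / bb p))"
    unfolding A_def B_def using finS Sne apos bpos SsubT by (intro logsum) auto
  have "M / 2 \<le> A / B"
  proof -
    have "M / 2 \<le> A * M" using AS M by (simp add: A_def) 
    also have "A * M \<le> A / B" using BS Bpos M AS unfolding B_def[symmetric] A_def[symmetric]
      by (simp add: field_simps)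
    finally show ?thesis .
  qed
  hence lnge: "ln (M / 2) \<le> ln (A / B)" using M by (intro ln_mono) auto
  have ln0: "ln (M / 2) \<ge> 0" using M by simp
  have "ln (M / 2) / 2 \<le> A * ln (A / B)"
  proof -
    have "ln (M / 2) / 2 \<le> A * ln (M / 2)" using AS ln0 unfolding A_def[symmetric]
      by (simp add: mult_right_mono[of "1/2" A "ln (M/2)", simplified])
    also have "\<dots> \<le> A * ln (A / B)" using lnge AS by (intro mult_left_mono) (auto simp: A_def)
    finally show ?thesis .
  qed
  thus ?thesis using dmi part R L by linarith
qed

lemma msg_pos: "q \<ge> 1 \<Longrightarrow> msg_size q n R \<ge> 1"
proof -
  assume "q \<ge> 1"
  hence "real q powr (real n * R) > 0" by simp
  hence "real_of_int \<lceil>real q powr (real n * R)\<rceil> > 0" using le_of_int_ceiling[of "real q powr (real n * R)"] by linarith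
  hence "\<lceil>real q powr (real n * R)\<rceil> \<ge> 1" by linarith
  thus ?thesis unfolding msg_size_def by linarith
qed

lemma msg_grow:
  assumes "q \<ge> 2" "R > 0"
  shows "\<exists>N. \<forall>n\<ge>N. real (msg_size q n R) \<ge> K"
proof -
  define N where "N = nat \<lceil>K / (R * ln q)\<rceil>"
  have lq: "ln q > 0" using assms by simp
  have "real (msg_size q n R) \<ge> K" if "n \<ge> N" for n
  proof -
    have "real n \<ge> K / (R * ln q)"
      using that real_nat_ceiling_ge[of "K / (R * ln q)"] unfolding N_def by linarith
    hence k: "real n * R * ln q \<ge> K" using lq assms by (simp add: field_simps)
    have "real q powr (real n * R) = exp (real n * R * ln q)"
      using assms by (simp add: powr_def mult.commute mult.left_commute)
    also have "\<dots> \<ge> 1 + real n * R * ln q" by simp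
    finally have "real q powr (real n * R) \<ge> K" using k by linarith
    thus ?thesis unfolding msg_size_def using real_nat_ceiling_ge[of "real q powr (real n * R)"] by linarith
  qed
  thus ?thesis by blast
qed

lemma space1:
  "bf_space q n R c = map_pmf (\<lambda>((w2, t2), (w1, t1)). (w1, w2, t1, t2))
     (pair_pmf (pair_pmf (pmf_of_set {..<msg_size q n (snd R)}) (th2 c))
               (pair_pmf (pmf_of_set {..<msg_size q n (fst R)}) (th1 c)))"
  (is "_ = map_pmf ?r ?P")
proof (rule pmf_eqI)
  fix i :: "nat \<times> nat \<times> nat \<times> nat"
  obtain w1 w2 t1 t2 where i: "i = (w1, w2, t1, t2)" by (cases i) auto
  have inj: "inj ?r" by (auto simp: inj_on_def)
  have "pmf (map_pmf ?r ?P) i = pmf (map_pmf ?r ?P) (?r ((w2, t2), (w1, t1)))" by (simp add: i)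
  also have "\<dots> = pmf ?P ((w2, t2), (w1, t1))" by (rule pmf_map_inj'[OF inj])
  finally show "pmf (bf_space q n R c) i = pmf (map_pmf ?r ?P) i"
    by (simp add: i bf_space_def pmf_pair)
qed

lemma space2:
  "bf_space q n R c = map_pmf (\<lambda>((w1, t1), (w2, t2)). (w1, w2, t1, t2))
     (pair_pmf (pair_pmf (pmf_of_set {..<msg_size q n (fst R)}) (th1 c))
               (pair_pmf (pmf_of_set {..<msg_size q n (snd R)}) (th2 c)))"
  (is "_ = map_pmf ?r ?P")
proof (rule pmf_eqI)
  fix i :: "nat \<times> nat \<times> nat \<times> nat"
  obtain w1 w2 t1 t2 where i: "i = (w1, w2, t1, t2)" by (cases i) auto
  have inj: "inj ?r" by (auto simp: inj_on_def)
  have "pmf (map_pmf ?r ?P) i = pmf (map_pmf ?r ?P) (?r ((w1, t1), (w2, t2)))" by (simp add: i)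
  also have "\<dots> = pmf ?P ((w1, t1), (w2, t2))" by (rule pmf_map_inj'[OF inj])
  finally show "pmf (bf_space q n R c) i = pmf (map_pmf ?r ?P) i"
    by (simp add: i bf_space_def pmf_pair)
qed

lemma snd_pair_measure: "measure_pmf.prob (pair_pmf B A) (snd -` F) = measure_pmf.prob A F"
  by (metis measure_map_pmf map_snd_pair_pmf)

lemma succ1:
  assumes "bf_error_prob q n R c < 1/2"
  shows "\<exists>h. measure_pmf.prob (bf_space q n R c) {\<omega>. h (bf_edge c 1 \<omega>) = fst \<omega>} \<ge> 1/2"
proof (rule ccontr)
  assume "\<not> ?thesis"
  hence H: "measure_pmf.prob (bf_space q n R c) {\<omega>. h (bf_edge c 1 \<omega>) = fst \<omega>} < 1/2" for h
    by (simp add: not_le)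
  define P where "P = bf_space q n R c"
  define B where "B = pair_pmf (pmf_of_set {..<msg_size q n (snd R)}) (th2 c)"
  define A where "A = pair_pmf (pmf_of_set {..<msg_size q n (fst R)}) (th1 c)"
  define r :: "(nat \<times> nat) \<times> nat \<times> nat \<Rightarrow> nat \<times> nat \<times> nat \<times> nat"
    where "r = (\<lambda>((w2, t2), (w1, t1)). (w1, w2, t1, t2))"
  have sp: "P = map_pmf r (pair_pmf B A)" unfolding P_def A_def B_def r_def by (rule space1)
  define E where "E = {\<omega>. dec1 c (bf_edge c 5 \<omega>) (bf_edge c 7 \<omega>) = fst \<omega>}"
  have "measure_pmf.prob P E = measure_pmf.prob (pair_pmf B A) (r -` E)" by (simp add: sp)
  also have "\<dots> \<le> 1/2"
  proof (rule avg_bound)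
    fix b assume "b \<in> set_pmf B"
    obtain w2 t2 where b: "b = (w2, t2)" by (cases b)
    define hb where "hb y = dec1 c (enc5 c w2 t2) (enc7 c (enc3 c y (enc2 c w2 t2)))" for y
    have s1: "{a. (b, a) \<in> r -` E} = {a. hb (enc1 c (fst a) (snd a)) = fst a}"
      by (auto simp: b r_def E_def hb_def Let_def)
    have s2: "snd -` {a. hb (enc1 c (fst a) (snd a)) = fst a} = r -` {\<omega>. hb (bf_edge c 1 \<omega>) = fst \<omega>}"
      by (auto simp: r_def Let_def)
    have "measure_pmf.prob A {a. (b, a) \<in> r -` E} = measure_pmf.prob (pair_pmf B A) (snd -` {a. hb (enc1 c (fst a) (snd a)) = fst a})"
      unfolding s1 by (rule snd_pair_measure[symmetric])
    also have "\<dots> = measure_pmf.prob (pair_pmf B A) (r -` {\<omega>. hb (bf_edge c 1 \<omega>) = fst \<omega>})" by (simp only: s2)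
    also have "\<dots> = measure_pmf.prob P {\<omega>. hb (bf_edge c 1 \<omega>) = fst \<omega>}"
      by (simp add: sp)
    also have "\<dots> \<le> 1/2" using H[of hb] by (simp add: P_def)
    finally show "measure_pmf.prob A {a. (b, a) \<in> r -` E} \<le> 1/2" .
  qed simp
  finally have PE: "measure_pmf.prob P E \<le> 1/2" .
  have "measure_pmf.prob P (UNIV - E) \<le> bf_error_prob q n R c"
    unfolding bf_error_prob_def P_def[symmetric] E_def
    by (rule measure_pmf.finite_measure_mono) auto
  moreover have "measure_pmf.prob P (UNIV - E) = 1 - measure_pmf.prob P E"
    using measure_pmf.prob_compl[of E P] by simp
  ultimately show False using PE assms by linarith
qed

lemma succ2:
  assumes "bf_error_prob q n R c < 1/2"
  shows "\<exists>h. measure_pmf.prob (bf_space q n R c) {\<omega>. h (bf_edge c 2 \<omega>) = fst (snd \<omega>)} \<ge> 1/2"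
proof (rule ccontr)
  assume "\<not> ?thesis"
  hence H: "measure_pmf.prob (bf_space q n R c) {\<omega>. h (bf_edge c 2 \<omega>) = fst (snd \<omega>)} < 1/2" for h
    by (simp add: not_le)
  define P where "P = bf_space q n R c"
  define B where "B = pair_pmf (pmf_of_set {..<msg_size q n (fst R)}) (th1 c)"
  define A where "A = pair_pmf (pmf_of_set {..<msg_size q n (snd R)}) (th2 c)"
  define r :: "(nat \<times> nat) \<times> nat \<times> nat \<Rightarrow> nat \<times> nat \<times> nat \<times> nat"
    where "r = (\<lambda>((w1, t1), (w2, t2)). (w1, w2, t1, t2))"
  have sp: "P = map_pmf r (pair_pmf B A)" unfolding P_def A_def B_def r_def by (rule space2)
  define E where "E = {\<omega>. dec2 c (bf_edge c 4 \<omega>) (bf_edge c 6 \<omega>) = fst (snd \<omega>)}"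
  have "measure_pmf.prob P E = measure_pmf.prob (pair_pmf B A) (r -` E)" by (simp add: sp)
  also have "\<dots> \<le> 1/2"
  proof (rule avg_bound)
    fix b assume "b \<in> set_pmf B"
    obtain w1 t1 where b: "b = (w1, t1)" by (cases b)
    define hb where "hb y = dec2 c (enc4 c w1 t1) (enc6 c (enc3 c (enc1 c w1 t1) y))" for y
    have s1: "{a. (b, a) \<in> r -` E} = {a. hb (enc2 c (fst a) (snd a)) = fst a}"
      by (auto simp: b r_def E_def hb_def Let_def)
    have s2: "snd -` {a. hb (enc2 c (fst a) (snd a)) = fst a} = r -` {\<omega>. hb (bf_edge c 2 \<omega>) = fst (snd \<omega>)}"
      by (auto simp: r_def Let_def)
    have "measure_pmf.prob A {a. (b, a) \<in> r -` E} = measure_pmf.prob (pair_pmf B A) (snd -` {a. hb (enc2 c (fst a) (snd a)) = fst a})"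
      unfolding s1 by (rule snd_pair_measure[symmetric])
    also have "\<dots> = measure_pmf.prob (pair_pmf B A) (r -` {\<omega>. hb (bf_edge c 2 \<omega>) = fst (snd \<omega>)})" by (simp only: s2)
    also have "\<dots> = measure_pmf.prob P {\<omega>. hb (bf_edge c 2 \<omega>) = fst (snd \<omega>)}"
      by (simp add: sp)
    also have "\<dots> \<le> 1/2" using H[of hb] by (simp add: P_def)
    finally show "measure_pmf.prob A {a. (b, a) \<in> r -` E} \<le> 1/2" .
  qed simp
  finally have PE: "measure_pmf.prob P E \<le> 1/2" .
  have "measure_pmf.prob P (UNIV - E) \<le> bf_error_prob q n R c"
    unfolding bf_error_prob_def P_def[symmetric] E_def
    by (rule measure_pmf.finite_measure_mono) auto
  moreover have "measure_pmf.prob P (UNIV - E) = 1 - measure_pmf.prob P E"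
    using measure_pmf.prob_compl[of E P] by simp
  ultimately show False using PE assms by linarith
qed

lemma set_space:
  assumes "q \<ge> 1"
  shows "set_pmf (bf_space q n R c) = {..<msg_size q n (fst R)} \<times> {..<msg_size q n (snd R)} \<times> set_pmf (th1 c) \<times> set_pmf (th2 c)"
proof -
  have "{..<msg_size q n (fst R)} \<noteq> {}" "{..<msg_size q n (snd R)} \<noteq> {}"
    using msg_pos[OF assms, of n "fst R"] msg_pos[OF assms, of n "snd R"] by (auto simp: lessThan_empty_iff)
  thus ?thesis by (simp add: bf_space_def)
qed

lemma marg1:
  assumes "q \<ge> 1"
  shows "measure_pmf.prob (bf_space q n R c) {\<omega>. fst ((\<lambda>\<omega>. (fst \<omega>, fst (snd \<omega>))) \<omega>) = v} \<le> 1 / real (msg_size q n (fst R))"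
proof -
  have ne: "{..<msg_size q n (fst R)} \<noteq> {}" using msg_pos[OF assms, of n "fst R"] by (auto simp: lessThan_empty_iff)
  have "measure_pmf.prob (bf_space q n R c) {\<omega>. fst ((\<lambda>\<omega>. (fst \<omega>, fst (snd \<omega>))) \<omega>) = v}
      = measure_pmf.prob (map_pmf fst (bf_space q n R c)) {v}" by (simp add: vimage_def)
  also have "\<dots> = pmf (pmf_of_set {..<msg_size q n (fst R)}) v"
    by (simp add: bf_space_def map_fst_pair_pmf measure_pmf_single)
  also have "\<dots> \<le> 1 / real (msg_size q n (fst R))" using ne by (simp add: indicator_def)
  finally show ?thesis .
qed

lemma marg2:
  assumes "q \<ge> 1"
  shows "measure_pmf.prob (bf_space q n R c) {\<omega>. snd ((\<lambda>\<omega>. (fst \<omega>, fst (snd \<omega>))) \<omega>) = v} \<le> 1 / real (msg_size q n (snd R))"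
proof -
  have ne: "{..<msg_size q n (snd R)} \<noteq> {}" using msg_pos[OF assms, of n "snd R"] by (auto simp: lessThan_empty_iff)
  have "measure_pmf.prob (bf_space q n R c) {\<omega>. snd ((\<lambda>\<omega>. (fst \<omega>, fst (snd \<omega>))) \<omega>) = v}
      = measure_pmf.prob (map_pmf fst (map_pmf snd (bf_space q n R c))) {v}" by (simp add: vimage_def)
  also have "\<dots> = pmf (pmf_of_set {..<msg_size q n (snd R)}) v"
    by (simp add: bf_space_def map_fst_pair_pmf map_snd_pair_pmf measure_pmf_single)
  also have "\<dots> \<le> 1 / real (msg_size q n (snd R))" using ne by (simp add: indicator_def)
  finally show ?thesis .
qed

lemma fin_img:
  assumes "q \<ge> 1" "\<forall>\<omega>\<in>set_pmf (bf_space q n R c). bf_edge c e \<omega> < K"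
  shows "finite ((\<lambda>\<omega>. ((\<lambda>\<omega>. (fst \<omega>, fst (snd \<omega>))) \<omega>, bf_edge c e \<omega>)) ` set_pmf (bf_space q n R c))"
proof (rule finite_subset)
  show "(\<lambda>\<omega>. ((\<lambda>\<omega>. (fst \<omega>, fst (snd \<omega>))) \<omega>, bf_edge c e \<omega>)) ` set_pmf (bf_space q n R c)
      \<subseteq> ({..<msg_size q n (fst R)} \<times> {..<msg_size q n (snd R)}) \<times> {..<K}"
    using assms(2) by (auto simp: set_space[OF assms(1)])
qed auto

lemma bound1:
  assumes q: "q \<ge> 2" and v: "bf_valid q C n c" and err: "bf_error_prob q n R c < 1/2"
    and M: "real (msg_size q n (fst R)) \<ge> 2"
  shows "ln (real (msg_size q n (fst R)) / 2) / 2 - 1 \<le> bf_leakage q n R c 1 * ln (real q)"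
proof -
  obtain h where h: "measure_pmf.prob (bf_space q n R c) {\<omega>. h (bf_edge c 1 \<omega>) = fst \<omega>} \<ge> 1/2"
    using succ1[OF err] by blast
  have q1: "q \<ge> 1" using q by simp
  have bd: "\<forall>\<omega>\<in>set_pmf (bf_space q n R c). bf_edge c 1 \<omega> < q ^ edge_len C n 1"
    using v by (auto simp: bf_valid_def Let_def)
  show ?thesis unfolding bf_leakage_def
    apply (rule mi_lower[where g = fst and h = h])
    using fin_img[OF q1 bd] q M marg1[OF q1] h by auto
qed

lemma bound2:
  assumes q: "q \<ge> 2" and v: "bf_valid q C n c" and err: "bf_error_prob q n R c < 1/2"
    and M: "real (msg_size q n (snd R)) \<ge> 2"
  shows "ln (real (msg_size q n (snd R)) / 2) / 2 - 1 \<le> bf_leakage q n R c 2 * ln (real q)"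
proof -
  obtain h where h: "measure_pmf.prob (bf_space q n R c) {\<omega>. h (bf_edge c 2 \<omega>) = fst (snd \<omega>)} \<ge> 1/2"
    using succ2[OF err] by blast
  have q1: "q \<ge> 1" using q by simp
  have bd: "\<forall>\<omega>\<in>set_pmf (bf_space q n R c). bf_edge c 2 \<omega> < q ^ edge_len C n 2"
    using v by (auto simp: bf_valid_def Let_def)
  show ?thesis unfolding bf_leakage_def
    apply (rule mi_lower[where g = snd and h = h])
    using fin_img[OF q1 bd] q M marg2[OF q1] h by auto
qed

lemma dmi_return: "disc_mutual_info b (return_pmf x) X Y = 0"
  by (simp add: disc_mutual_info_def)

theorem theorem2:
  fixes q :: nat and C :: "nat \<Rightarrow> real" and R1 R2 :: real
  assumes "prime_power q"
    and "\<forall>e \<in> {1..7}. C e \<ge> 0"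
  shows "bf_securely_achievable q C (R1, R2) \<longleftrightarrow> R1 = 0 \<and> R2 = 0"
proof -
  from assms(1) obtain p k where pk: "prime p" "k > 0" "q = p ^ k" by (auto simp: prime_power_def)
  have "p \<ge> 2" using pk(1) by (rule prime_ge_2_nat)
  moreover have "p \<le> p ^ k" using pk \<open>p \<ge> 2\<close> by (intro self_le_power) auto
  ultimately have q2: "q \<ge> 2" using pk by simp
  have lq: "ln (real q) > 0" using q2 by simp
  show ?thesis
  proof
    assume ach: "bf_securely_achievable q C (R1, R2)"
    have ex: "R1 \<ge> 0 \<and> R2 \<ge> 0 \<and> (\<exists>code :: nat \<Rightarrow> bf_code.
        (\<forall>n. bf_valid q C n (code n)) \<and>
        (\<lambda>n. bf_error_prob q n (R1, R2) (code n)) \<longlonglongrightarrow> 0 \<and>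
        (\<forall>e \<in> {1..7}. (\<lambda>n. bf_leakage q n (R1, R2) (code n) e) \<longlonglongrightarrow> 0))"
      using ach unfolding bf_securely_achievable_def fst_conv snd_conv .
    then obtain code where R: "R1 \<ge> 0" "R2 \<ge> 0"
      and valid': "\<forall>n. bf_valid q C n (code n)"
      and err: "(\<lambda>n. bf_error_prob q n (R1, R2) (code n)) \<longlonglongrightarrow> 0"
      and leak': "\<forall>e \<in> {1..7}. (\<lambda>n. bf_leakage q n (R1, R2) (code n) e) \<longlonglongrightarrow> 0"
      by (elim conjE exE)
    have valid: "bf_valid q C n (code n)" for n using valid' by blast
    have leak: "(\<lambda>n. bf_leakage q n (R1, R2) (code n) e) \<longlonglongrightarrow> 0" if "e \<in> {1..7}" for e
      using leak' that by blast
    obtain N1 where N1: "\<forall>n\<ge>N1. norm (bf_error_prob q n (R1, R2) (code n) - 0) < 1/2"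
      using LIMSEQ_D[OF err, of "1/2"] by auto
    have pos: "0 < 1 / ln (real q)" using lq by simp
    have i1: "(1::nat) \<in> {1..7}" "(2::nat) \<in> {1..7}" by auto
    obtain N2 where N2: "\<forall>n\<ge>N2. norm (bf_leakage q n (R1, R2) (code n) 1 - 0) < 1 / ln (real q)"
      using LIMSEQ_D[OF leak[OF i1(1)] pos] by blast
    obtain N2' where N2': "\<forall>n\<ge>N2'. norm (bf_leakage q n (R1, R2) (code n) 2 - 0) < 1 / ln (real q)"
      using LIMSEQ_D[OF leak[OF i1(2)] pos] by blast
    have e6: "exp (6::real) \<ge> 1" by simp
    show "R1 = 0 \<and> R2 = 0"
    proof (rule ccontr)
      assume "\<not> (R1 = 0 \<and> R2 = 0)"
      hence "R1 > 0 \<or> R2 > 0" using R by auto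
      thus False
      proof
        assume R1: "R1 > 0"
        obtain N3 where N3: "\<forall>n\<ge>N3. real (msg_size q n R1) \<ge> 2 * exp 6"
          using msg_grow[OF q2 R1] by blast
        define n where "n = max N1 (max N2 N3)"
        have nge: "n \<ge> N1" "n \<ge> N2" "n \<ge> N3" by (simp_all add: n_def)
        have "norm (bf_error_prob q n (R1, R2) (code n) - 0) < 1/2" using N1 nge(1) by blast
        hence er: "bf_error_prob q n (R1, R2) (code n) < 1/2" by simp
        have "norm (bf_leakage q n (R1, R2) (code n) 1 - 0) < 1 / ln (real q)" using N2 nge(2) by blast
        hence lk: "\<bar>bf_leakage q n (R1, R2) (code n) 1\<bar> < 1 / ln (real q)" by simp
        have M: "real (msg_size q n R1) \<ge> 2 * exp 6" using N3 nge(3) by blast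
        have b: "ln (real (msg_size q n R1) / 2) / 2 - 1 \<le> bf_leakage q n (R1, R2) (code n) 1 * ln (real q)"
          using bound1[OF q2 valid er] M e6 by simp
        have "ln (exp 6) \<le> ln (real (msg_size q n R1) / 2)" using M by (intro ln_mono) auto
        hence "6 \<le> ln (real (msg_size q n R1) / 2)" by simp
        moreover have "bf_leakage q n (R1, R2) (code n) 1 * ln (real q) < 1"
          using lk lq by (simp add: field_simps abs_less_iff)
        ultimately show False using b by linarith
      next
        assume R2: "R2 > 0"
        obtain N3 where N3: "\<forall>n\<ge>N3. real (msg_size q n R2) \<ge> 2 * exp 6"
          using msg_grow[OF q2 R2] by blast
        define n where "n = max N1 (max N2' N3)"
        have nge: "n \<ge> N1" "n \<ge> N2'" "n \<ge> N3" by (simp_all add: n_def)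
        have "norm (bf_error_prob q n (R1, R2) (code n) - 0) < 1/2" using N1 nge(1) by blast
        hence er: "bf_error_prob q n (R1, R2) (code n) < 1/2" by simp
        have "norm (bf_leakage q n (R1, R2) (code n) 2 - 0) < 1 / ln (real q)" using N2' nge(2) by blast
        hence lk: "\<bar>bf_leakage q n (R1, R2) (code n) 2\<bar> < 1 / ln (real q)" by simp
        have M: "real (msg_size q n R2) \<ge> 2 * exp 6" using N3 nge(3) by blast
        have b: "ln (real (msg_size q n R2) / 2) / 2 - 1 \<le> bf_leakage q n (R1, R2) (code n) 2 * ln (real q)"
          using bound2[OF q2 valid er] M e6 by simp
        have "ln (exp 6) \<le> ln (real (msg_size q n R2) / 2)" using M by (intro ln_mono) auto
        hence "6 \<le> ln (real (msg_size q n R2) / 2)" by simp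
        moreover have "bf_leakage q n (R1, R2) (code n) 2 * ln (real q) < 1"
          using lk lq by (simp add: field_simps abs_less_iff)
        ultimately show False using b by linarith
      qed
    qed
  next
    assume "R1 = 0 \<and> R2 = 0"
    hence R0: "R1 = 0" "R2 = 0" by auto
    define c0 where "c0 = \<lparr>th1 = return_pmf 0, th2 = return_pmf 0,
       enc1 = \<lambda>_ _. 0, enc4 = \<lambda>_ _. 0, enc2 = \<lambda>_ _. 0, enc5 = \<lambda>_ _. 0,
       enc3 = \<lambda>_ _. 0, enc6 = \<lambda>_. 0, enc7 = \<lambda>_. 0, dec1 = \<lambda>_ _. 0, dec2 = \<lambda>_ _. 0\<rparr>"
    have ms: "msg_size q n 0 = 1" for n using q2 by (simp add: msg_size_def)
    have l1: "{..<Suc 0} = {0::nat}" by auto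
    have sp: "bf_space q n (0, 0) c0 = return_pmf (0, 0, 0, 0)" for n
      by (simp add: bf_space_def ms c0_def l1 pmf_of_set_singleton)
    have v: "bf_valid q C n c0" for n using q2 by (simp add: bf_valid_def c0_def)
    have e: "bf_error_prob q n (0, 0) c0 = 0" for n
      unfolding bf_error_prob_def sp by (simp add: c0_def)
    have lk: "bf_leakage q n (0, 0) c0 e = 0" for n e
      by (simp add: bf_leakage_def sp dmi_return)
    show "bf_securely_achievable q C (R1, R2)"
      unfolding bf_securely_achievable_def R0
      by (rule conjI, simp, rule conjI, simp, rule exI[of _ "\<lambda>_. c0"]) (simp add: v e lk)
  qed
qed

end
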